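(* Consider the faulty-starter delivery problem described in the context, with finisher starting position $(x,y)$, $y\ge0$, and assume $(x,y)\notin D(1,1)$, i.e. $\sqrt{(x-1)^2+y^2}\ge 1$. Let $z_1=\sqrt{(x-1)^2+y^2}$ and $$t_1=\begin{cases}1-\dfrac{3y}{4} & \text{if } x=1,\\[2mm] \dfrac{x^2+y^2+z_1(1-x)-1-z_1\sqrt{x(x+z_1-2)+y^2-z_1+1}}{2(x-1)} & \text{otherwise.}\end{cases}$$ Then the competitive ratio of $\mathcal{A}_1$ equals $\mathrm{CR}_{\mathcal{A}_1}(\max\{t_1,0\})$, where $\mathrm{CR}_{\mathcal{A}_1}(t)=\dfrac{\sqrt{(x-1)^2+y^2}+2(1-t)}{\max\{1,\sqrt{(x-t)^2+y^2}+1-t\}}$.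
   Context: Setting. In the plane let $S=(0,0)$ and $T=(1,0)$. A "starter" drone carrying a package starts at $S$ at time $0$ and moves at unit speed along $\overline{ST}$ towards $T$. At an unknown time $t\in[0,1]$ it fails and stays forever at $(t,0)$ with the package. A "finisher" drone starts at time $0$ at $P=(x,y)$ with $y\ge0$, moves at unit speed and can stop and turn instantaneously. The package can be handed over only when the drones are co-located; it is delivered at the first time the finisher, carrying the package, is at $T$. An online algorithm $\mathcal{A}$ specifies the finisher's trajectory using only $(x,y)$; $A(t)$ is its delivery time for fail time $t$. $\mathrm{Opt}(t)=\max\{1,\sqrt{(x-t)^2+y^2}+1-t\}$ is the optimal offline delivery time. $\mathrm{CR}_{\mathcal{A}}(t)=A(t)/\mathrm{Opt}(t)$ and $\mathrm{CR}_{\mathcal{A}}=\sup_{0\le t\le1}\mathrm{CR}_{\mathcal{A}}(t)$. $D(c,r)$ denotes the open disk of radius $r$ centered at $(c,0)$. Algorithm $\mathcal{A}_1$: the finisher goes straight to $T$, then moves along the segment towards $S$ until it finds the package, then returns to $T$; its delivery time is $A_1(t)=\sqrt{(x-1)^2+y^2}+2(1-t)$. *)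

theory Defs
  imports "HOL-Analysis.Analysis"
begin

text \<open>Optimal offline delivery time for fail time t, finisher start (x,y).\<close>
definition Opt :: "real \<Rightarrow> real \<Rightarrow> real \<Rightarrow> real" where
  "Opt x y t = max 1 (sqrt ((x - t)^2 + y^2) + 1 - t)"

definition A1 :: "real \<Rightarrow> real \<Rightarrow> real \<Rightarrow> real" where
  "A1 x y t = sqrt ((x - 1)^2 + y^2) + 2 * (1 - t)"

definition CR_A1_at :: "real \<Rightarrow> real \<Rightarrow> real \<Rightarrow> real" where
  "CR_A1_at x y t = A1 x y t / Opt x y t"

definition CR_A1 :: "real \<Rightarrow> real \<Rightarrow> real" where
  "CR_A1 x y = (SUP t\<in>{0..1}. CR_A1_at x y t)"

definition t1 :: "real \<Rightarrow> real \<Rightarrow> real" where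
  "t1 x y = (let z1 = sqrt ((x - 1)^2 + y^2) in
     if x = 1 then 1 - 3 * y / 4
     else (x^2 + y^2 + z1 * (1 - x) - 1 - z1 * sqrt (x * (x + z1 - 2) + y^2 - z1 + 1))
          / (2 * (x - 1)))"

end

theory Submission
  imports Defs
begin

lemma cs_sqrt:
  fixes p q y :: real
  shows "p * q + y^2 \<le> sqrt (p^2 + y^2) * sqrt (q^2 + y^2)"
proof -
  have "(p * q + y^2)^2 \<le> (p^2 + y^2) * (q^2 + y^2)"
  proof -
    have "(p^2 + y^2) * (q^2 + y^2) - (p * q + y^2)^2 = y^2 * (p - q)^2"
      by (simp add: power2_eq_square algebra_simps)
    moreover have "y^2 * (p - q)^2 \<ge> 0" by simp
    ultimately show ?thesis by linarith
  qed
  hence "p * q + y^2 \<le> sqrt ((p^2 + y^2) * (q^2 + y^2))" by (rule real_le_rsqrt)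
  thus ?thesis by (simp add: real_sqrt_mult)
qed

lemma sqrt_abs_le:
  fixes p y :: real
  shows "\<bar>p\<bar> \<le> sqrt (p^2 + y^2)"
  by (simp add: real_le_rsqrt)

lemma tri_sqrt:
  fixes x y t :: real
  assumes "t \<le> 1"
  shows "sqrt ((x - 1)^2 + y^2) \<le> sqrt ((x - t)^2 + y^2) + (1 - t)"
proof -
  let ?d = "sqrt ((x - t)^2 + y^2)"
  have d0: "?d \<ge> 0" by simp
  have dd: "?d^2 = (x - t)^2 + y^2" by simp
  have da: "\<bar>x - t\<bar> \<le> ?d" by (rule sqrt_abs_le)
  have "(x - 1)^2 + y^2 \<le> (?d + (1 - t))^2"
  proof -
    have "(?d + (1 - t))^2 - ((x - 1)^2 + y^2) = 2 * (1 - t) * (?d + (x - t))"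
      using dd by (simp add: power2_eq_square algebra_simps)
    moreover have "?d + (x - t) \<ge> 0" using da by linarith
    ultimately show ?thesis using assms by (smt (verit) mult_nonneg_nonneg)
  qed
  thus ?thesis by (intro real_le_lsqrt) (use d0 assms in auto)
qed

lemma convex_sqrt:
  fixes p q r y :: real
  assumes "p \<le> r" "r \<le> q"
  shows "(q - p) * sqrt (r^2 + y^2) \<le> (q - r) * sqrt (p^2 + y^2) + (r - p) * sqrt (q^2 + y^2)"
proof -
  let ?A = "sqrt (p^2 + y^2)" and ?B = "sqrt (q^2 + y^2)"
  have A2: "?A^2 = p^2 + y^2" and B2: "?B^2 = q^2 + y^2" by simp_all
  have cs: "p * q + y^2 \<le> ?A * ?B" by (rule cs_sqrt)
  have pos: "(q - r) * (r - p) \<ge> 0" using assms by simp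
  have "((q - p) * r)^2 + ((q - p) * y)^2 \<le> ((q - r) * ?A + (r - p) * ?B)^2"
  proof -
    have e1: "((q - r) * ?A + (r - p) * ?B)^2 = (q - r)^2 * (p^2 + y^2) + (r - p)^2 * (q^2 + y^2) + 2 * ((q - r) * (r - p)) * (?A * ?B)"
      using A2 B2 by (simp add: power2_eq_square algebra_simps)
    have e2: "((q - p) * r)^2 + ((q - p) * y)^2 = (q - r)^2 * (p^2 + y^2) + (r - p)^2 * (q^2 + y^2) + 2 * ((q - r) * (r - p)) * (p * q + y^2)"
      by (simp add: power2_eq_square algebra_simps)
    have "2 * ((q - r) * (r - p)) * (p * q + y^2) \<le> 2 * ((q - r) * (r - p)) * (?A * ?B)"
      using cs pos by (intro mult_left_mono) auto
    thus ?thesis using e1 e2 by linarith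
  qed
  hence "sqrt (((q - p) * r)^2 + ((q - p) * y)^2) \<le> (q - r) * ?A + (r - p) * ?B"
    using assms by (intro real_le_lsqrt) auto
  moreover have "sqrt (((q - p) * r)^2 + ((q - p) * y)^2) = (q - p) * sqrt (r^2 + y^2)"
  proof -
    have "((q - p) * r)^2 + ((q - p) * y)^2 = (q - p)^2 * (r^2 + y^2)" by (simp add: power2_eq_square algebra_simps)
    thus ?thesis using assms by (simp add: real_sqrt_mult)
  qed
  ultimately show ?thesis by simp
qed


lemma opt_eq:
  fixes x y t :: real
  assumes "sqrt ((x - 1)^2 + y^2) \<ge> 1" "t \<le> 1"
  shows "Opt x y t = sqrt ((x - t)^2 + y^2) + 1 - t"
proof -
  have "1 \<le> sqrt ((x - t)^2 + y^2) + 1 - t" using tri_sqrt[OF assms(2), of x y] assms(1) by linarith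
  thus ?thesis unfolding Opt_def by (rule max_absorb2)
qed

lemma tangent:
  fixes x y m t :: real
  defines "z \<equiv> sqrt ((x - 1)^2 + y^2)"
  defines "dm \<equiv> sqrt ((x - m)^2 + y^2)"
  assumes z1: "z \<ge> 1" and m: "0 \<le> m" "m \<le> 1" and t: "0 \<le> t" "t \<le> 1"
    and dmpos: "dm > 0"
    and H: "(2 * dm * (dm + 1 - m) - (z + 2 * (1 - m)) * ((x - m) + dm)) * (t - m) \<ge> 0"
  shows "CR_A1_at x y t \<le> CR_A1_at x y m"
proof -
  define d where "d = sqrt ((x - t)^2 + y^2)"
  define L where "L = z + 2 * (1 - m)"
  define M where "M = dm + 1 - m"
  have Ot: "Opt x y t = d + 1 - t" using opt_eq[of x y t] z1 t unfolding z_def d_def by simp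
  have Om: "Opt x y m = M" using opt_eq[of x y m] z1 m unfolding z_def dm_def M_def by simp
  have tr1: "z \<le> d + (1 - t)" using tri_sqrt[OF t(2), of x y] unfolding z_def d_def by simp
  have tr2: "z \<le> dm + (1 - m)" using tri_sqrt[OF m(2), of x y] unfolding z_def dm_def by simp
  have Bpos: "d + 1 - t > 0" using tr1 z1 by linarith
  have Mpos: "M > 0" using tr2 z1 unfolding M_def by linarith
  have A1t: "A1 x y t = z + 2 * (1 - t)" unfolding A1_def z_def by simp
  have A1m: "A1 x y m = L" unfolding A1_def z_def L_def by simp
  have L0: "L \<ge> 0" using z1 m unfolding L_def by simp
  have cs: "(x - t) * (x - m) + y^2 \<le> d * dm" unfolding d_def dm_def by (rule cs_sqrt)
  have dm2: "dm^2 = (x - m)^2 + y^2" unfolding dm_def by simp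
  have step1: "L * ((x - t) * (x - m) + y^2) \<le> L * (d * dm)" using cs L0 by (rule mult_left_mono)
  have iden: "L * ((x - t) * (x - m) + y^2) + dm * L * (1 - t) - dm * (z + 2 * (1 - t)) * M
      = (2 * dm * (dm + 1 - m) - (z + 2 * (1 - m)) * ((x - m) + dm)) * (t - m)"
    unfolding L_def M_def using dm2 by algebra
  have "dm * (L * (d + 1 - t) - (z + 2 * (1 - t)) * M) \<ge> 0"
  proof -
    have "dm * (L * (d + 1 - t) - (z + 2 * (1 - t)) * M) = L * (d * dm) + dm * L * (1 - t) - dm * (z + 2 * (1 - t)) * M"
      by (simp add: algebra_simps)
    thus ?thesis using step1 iden H by linarith
  qed
  hence X: "L * (d + 1 - t) - (z + 2 * (1 - t)) * M \<ge> 0" using dmpos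
    by (simp add: zero_le_mult_iff)
  have "(z + 2 * (1 - t)) / (d + 1 - t) \<le> L / M"
    using X Bpos Mpos by (simp add: divide_simps algebra_simps)
  thus ?thesis unfolding CR_A1_at_def using Ot Om A1t A1m by simp
qed


definition Hf :: "real \<Rightarrow> real \<Rightarrow> real \<Rightarrow> real" where
  "Hf x y m = 2 * sqrt ((x - m)^2 + y^2) * (sqrt ((x - m)^2 + y^2) + 1 - m)
     - (sqrt ((x - 1)^2 + y^2) + 2 * (1 - m)) * ((x - m) + sqrt ((x - m)^2 + y^2))"

lemma crit_x1:
  fixes y :: real
  assumes y: "y \<ge> 0" and z1: "sqrt ((1 - 1)^2 + y^2) \<ge> 1"
  shows "t1 1 y \<le> 1" "t1 1 y > 0 \<Longrightarrow> Hf 1 y (t1 1 y) = 0" "t1 1 y \<le> 0 \<Longrightarrow> Hf 1 y 0 \<ge> 0"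
proof -
  have z: "sqrt ((1 - 1)^2 + y^2) = y" using y by simp
  have t: "t1 1 y = 1 - 3 * y / 4" unfolding t1_def by simp
  show "t1 1 y \<le> 1" using t y by simp
  show "Hf 1 y (t1 1 y) = 0" if "t1 1 y > 0"
  proof -
    have "(1 - (1 - 3 * y / 4))^2 + y^2 = (5 * y / 4)^2" by (simp add: power2_eq_square algebra_simps)
    hence d: "sqrt ((1 - (1 - 3 * y / 4))^2 + y^2) = 5 * y / 4" using y by simp
    show ?thesis unfolding Hf_def t d z by (simp add: algebra_simps power2_eq_square)
  qed
  show "Hf 1 y 0 \<ge> 0" if "t1 1 y \<le> 0"
  proof -
    have y43: "y \<ge> 4 / 3" using that t by simp
    define d where "d = sqrt (1 + y^2)"
    have d0: "d \<ge> 0" unfolding d_def by simp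
    have "((y + 2) / 2)^2 \<le> 1 + y^2"
    proof -
      have "1 + y^2 - ((y + 2) / 2)^2 = y * (3 * y - 4) / 4" by (simp add: power2_eq_square algebra_simps)
      moreover have "y * (3 * y - 4) \<ge> 0" using y43 by simp
      ultimately show ?thesis by simp
    qed
    hence "(y + 2) / 2 \<le> d" unfolding d_def by (rule real_le_rsqrt)
    hence "(d + 1) * (2 * d - y - 2) \<ge> 0" using d0 by simp
    moreover have "Hf 1 y 0 = (d + 1) * (2 * d - y - 2)"
      unfolding Hf_def z d_def by (simp add: algebra_simps)
    ultimately show ?thesis by simp
  qed
qed


lemma crit_gen:
  fixes x y :: real
  assumes y: "y \<ge> 0" and z1: "sqrt ((x - 1)^2 + y^2) \<ge> 1" and x1: "x \<noteq> 1"
  shows "t1 x y \<le> 1 \<and> (t1 x y > 0 \<longrightarrow> Hf x y (t1 x y) = 0) \<and> (t1 x y \<le> 0 \<longrightarrow> Hf x y 0 \<ge> 0)"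
proof -
  define a where "a = x - 1"
  define z where "z = sqrt ((x - 1)^2 + y^2)"
  have a0: "a \<noteq> 0" using x1 unfolding a_def by simp
  have zge: "z \<ge> 1" using z1 unfolding z_def .
  have z2: "z^2 = a^2 + y^2" unfolding z_def a_def by simp
  have y2: "y^2 = z^2 - a^2" using z2 by simp
  have za: "\<bar>a\<bar> \<le> z" unfolding z_def a_def by (rule sqrt_abs_le)
  have rad: "x * (x + z - 2) + y^2 - z + 1 = z * (z + a)"
    using z2 unfolding a_def by (simp add: power2_eq_square algebra_simps)
  define R where "R = sqrt (x * (x + z - 2) + y^2 - z + 1)"
  have radnn: "z * (z + a) \<ge> 0" using za zge by simp
  have R0: "R \<ge> 0" unfolding R_def rad using radnn by simp
  have R2: "R^2 = z * (z + a)" unfolding R_def rad by (rule real_sqrt_pow2[OF radnn])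
  have t1e: "t1 x y = (x^2 + y^2 + z * (1 - x) - 1 - z * R) / (2 * a)"
    unfolding t1_def Let_def z_def[symmetric] R_def[symmetric] a_def using x1 by simp
  define w1 where "w1 = ((z + a) * (2 * a - z) + z * R) / (2 * a)"
  have t1w: "t1 x y = x - w1"
  proof -
    have "x^2 + y^2 + z * (1 - x) - 1 - z * R = 2 * a * x - ((z + a) * (2 * a - z) + z * R)"
      using y2 unfolding a_def by (simp add: power2_eq_square algebra_simps)
    hence "t1 x y = (2 * a * x - ((z + a) * (2 * a - z) + z * R)) / (2 * a)" unfolding t1e by simp
    also have "\<dots> = (2 * a * x) / (2 * a) - ((z + a) * (2 * a - z) + z * R) / (2 * a)"
      by (rule diff_divide_distrib)
    also have "\<dots> = x - w1" unfolding w1_def using a0 by simp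
    finally show ?thesis .
  qed
  define D where "D = R * (R + 2 * a - z) / (2 * a)"
  have D0: "D \<ge> 0"
  proof -
    have "(R + 2 * a - z) / a \<ge> 0"
    proof (cases "a > 0")
      case True
      have "R \<ge> z - 2 * a"
      proof (cases "z - 2 * a \<le> 0")
        case True then show ?thesis using R0 by linarith
      next
        case False
        have "R^2 - (z - 2 * a)^2 = a * (5 * z - 4 * a)" using R2 by algebra
        moreover have "a * (5 * z - 4 * a) \<ge> 0" using True za by (intro mult_nonneg_nonneg) auto
        ultimately have "(z - 2 * a)^2 \<le> R^2" by simp
        thus ?thesis using R0 by (rule power2_le_imp_le)
      qed
      thus ?thesis using True by simp
    next
      case False
      hence an: "a < 0" using a0 by linarith
      have "R^2 - (z - 2 * a)^2 = a * (5 * z - 4 * a)" using R2 by algebra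
      moreover have "a * (5 * z - 4 * a) \<le> 0" using an za by (intro mult_nonpos_nonneg) auto
      ultimately have "R^2 \<le> (z - 2 * a)^2" by simp
      moreover have "0 \<le> z - 2 * a" using an zge by linarith
      ultimately have "R \<le> z - 2 * a" by (rule power2_le_imp_le)
      hence "R + 2 * a - z \<le> 0" by linarith
      thus ?thesis using an by (rule divide_nonpos_neg)
    qed
    hence "R * ((R + 2 * a - z) / a) \<ge> 0" using R0 by (intro mult_nonneg_nonneg)
    hence "R * ((R + 2 * a - z) / a) / 2 \<ge> 0" by (rule divide_nonneg_pos) simp
    moreover have "R * ((R + 2 * a - z) / a) / 2 = D" unfolding D_def by simp
    ultimately show ?thesis by simp
  qed
  have P: "(R * (R + 2 * a - z))^2 = ((z + a) * (2 * a - z) + z * R)^2 + (2 * a)^2 * y^2"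
    using R2 y2 by algebra
  have D2: "D^2 = w1^2 + y^2"
    unfolding D_def w1_def using P a0 by (simp add: field_simps power2_eq_square)
  have dD: "sqrt (w1^2 + y^2) = D" using D2 D0 by (metis real_sqrt_abs abs_of_nonneg)
  have zD: "z * D = 2 * y^2 + (2 * a - z) * w1"
  proof -
    have "z * (R * (R + 2 * a - z)) = 2 * a * (2 * y^2) + (2 * a - z) * ((z + a) * (2 * a - z) + z * R)"
      using R2 y2 by algebra
    thus ?thesis unfolding D_def w1_def using a0 by (simp add: field_simps)
  qed
  have w1a: "w1 \<ge> a"
  proof -
    have e: "w1 - a = z * ((R - (z - a)) / a) / 2"
      unfolding w1_def using a0 by (simp add: field_simps power2_eq_square)
    have "(R - (z - a)) / a \<ge> 0"
    proof (cases "a > 0")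
      case True
      have "R^2 - (z - a)^2 = a * (3 * z - a)" using R2 by algebra
      moreover have "a * (3 * z - a) \<ge> 0" using True za by (intro mult_nonneg_nonneg) auto
      ultimately have "(z - a)^2 \<le> R^2" by simp
      hence "z - a \<le> R" using R0 by (rule power2_le_imp_le)
      thus ?thesis using True by simp
    next
      case False
      hence an: "a < 0" using a0 by linarith
      have "R^2 - (z - a)^2 = a * (3 * z - a)" using R2 by algebra
      moreover have "a * (3 * z - a) \<le> 0" using an za by (intro mult_nonpos_nonneg) auto
      ultimately have "R^2 \<le> (z - a)^2" by simp
      moreover have "0 \<le> z - a" using an zge by linarith
      ultimately have "R \<le> z - a" by (rule power2_le_imp_le)
      hence "R - (z - a) \<le> 0" by linarith
      thus ?thesis using an by (rule divide_nonpos_neg)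
    qed
    hence "z * ((R - (z - a)) / a) \<ge> 0" using zge by (intro mult_nonneg_nonneg) auto
    hence "z * ((R - (z - a)) / a) / 2 \<ge> 0" by (rule divide_nonneg_pos) simp
    hence "w1 - a \<ge> 0" by (subst e)
    thus ?thesis by linarith
  qed
  have part1: "t1 x y \<le> 1" using t1w w1a unfolding a_def by simp
  have part2: "Hf x y (t1 x y) = 0"
  proof -
    have xm: "x - t1 x y = w1" using t1w by simp
    have "Hf x y (t1 x y) = 2 * D * (D + 1 - (x - w1)) - (z + 2 * (1 - (x - w1))) * (w1 + D)"
      unfolding Hf_def xm z_def[symmetric] unfolding t1w dD by simp
    also have "\<dots> = 2 * (D^2 - w1^2 - y^2) - (z * D - 2 * y^2 - (2 * a - z) * w1)"
      unfolding a_def by (simp add: power2_eq_square algebra_simps)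
    also have "\<dots> = 0" using D2 zD by simp
    finally show ?thesis .
  qed
  have part3: "Hf x y 0 \<ge> 0" if "t1 x y \<le> 0"
  proof -
    define d0 where "d0 = sqrt (x^2 + y^2)"
    have xw: "a + 1 \<le> w1" using that t1w unfolding a_def by simp
    have cv: "(w1 - a) * sqrt ((a + 1)^2 + y^2) \<le> (w1 - (a + 1)) * sqrt (a^2 + y^2) + (a + 1 - a) * sqrt (w1^2 + y^2)"
      using xw by (intro convex_sqrt) auto
    have cv2: "(w1 - a) * d0 \<le> (w1 - a - 1) * z + D"
      using cv unfolding d0_def dD a_def z_def by simp
    have H0: "Hf x y 0 = 2 * y^2 + (2 * a - z) * x - z * d0"
    proof -
      have "d0^2 = x^2 + y^2" unfolding d0_def by simp
      moreover have "Hf x y 0 = 2 * d0 * (d0 + 1) - (z + 2) * (x + d0)"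
        unfolding Hf_def d0_def z_def by simp
      ultimately show ?thesis unfolding a_def by (simp add: power2_eq_square algebra_simps)
    qed
    have "z * ((w1 - a) * d0) \<le> z * ((w1 - a - 1) * z + D)"
      using cv2 zge by (intro mult_left_mono) auto
    moreover have "(w1 - a) * (2 * y^2 + (2 * a - z) * x) - z * ((w1 - a - 1) * z + D)
        = (w1 - a - 1) * (2 * y^2 + (2 * a - z) * a - z * z) + (2 * y^2 + (2 * a - z) * w1 - z * D)"
      unfolding a_def by (simp add: algebra_simps)
    moreover have "2 * y^2 + (2 * a - z) * a - z * z = z * (z - a)" using y2 by (simp add: power2_eq_square algebra_simps)
    moreover have "z * (z - a) \<ge> 0" using za zge by simp
    moreover have "w1 - a - 1 \<ge> 0" using xw by simp
    ultimately have "(w1 - a) * (2 * y^2 + (2 * a - z) * x) - z * ((w1 - a) * d0) \<ge> 0"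
      using zD by (smt (verit) mult_nonneg_nonneg)
    hence "(w1 - a) * Hf x y 0 \<ge> 0" unfolding H0 by (simp add: algebra_simps)
    moreover have "w1 - a > 0" using xw by simp
    ultimately show ?thesis by (simp add: zero_le_mult_iff)
  qed
  show ?thesis using part1 part2 part3 by blast
qed


lemma crit_all:
  fixes x y :: real
  assumes y: "y \<ge> 0" and z1: "sqrt ((x - 1)^2 + y^2) \<ge> 1"
  shows "t1 x y \<le> 1 \<and> (t1 x y > 0 \<longrightarrow> Hf x y (t1 x y) = 0) \<and> (t1 x y \<le> 0 \<longrightarrow> Hf x y 0 \<ge> 0)"
proof (cases "x = 1")
  case True
  show ?thesis using crit_x1[OF y] z1 unfolding True by blast
next
  case False
  show ?thesis by (rule crit_gen[OF y z1 False])
qed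

lemma t1_00: "t1 0 0 = 0"
  unfolding t1_def Let_def by simp

theorem theorem2:
  fixes x y :: real
  assumes "y \<ge> 0"
    and "sqrt ((x - 1)^2 + y^2) \<ge> 1"
  shows "CR_A1 x y = CR_A1_at x y (max (t1 x y) 0)"
proof -
  define m where "m = max (t1 x y) 0"
  have cr: "t1 x y \<le> 1 \<and> (t1 x y > 0 \<longrightarrow> Hf x y (t1 x y) = 0) \<and> (t1 x y \<le> 0 \<longrightarrow> Hf x y 0 \<ge> 0)"
    by (rule crit_all[OF assms])
  have m0: "0 \<le> m" and m1: "m \<le> 1" using cr unfolding m_def by auto
  have bound: "CR_A1_at x y t \<le> CR_A1_at x y m" if t: "0 \<le> t" "t \<le> 1" for t
  proof (cases "x = 0 \<and> y = 0")
    case True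
    hence xy: "x = 0" "y = 0" by auto
    have mz: "m = 0" unfolding m_def xy t1_00 by simp
    have "CR_A1_at 0 0 t = 3 - 2 * t"
    proof -
      have "max 1 (\<bar>t\<bar> + 1 - t) = 1" using t by simp
      thus ?thesis unfolding CR_A1_at_def A1_def Opt_def by simp
    qed
    moreover have "CR_A1_at 0 0 0 = 3" unfolding CR_A1_at_def A1_def Opt_def by simp
    ultimately show ?thesis unfolding xy mz using t by simp
  next
    case False
    have dpos: "sqrt ((x - m)^2 + y^2) > 0"
    proof (rule ccontr)
      assume "\<not> sqrt ((x - m)^2 + y^2) > 0"
      hence "(x - m)^2 + y^2 = 0" by (metis add_nonneg_nonneg not_less real_sqrt_gt_0_iff zero_le_power2 order_antisym)
      hence xm: "x = m" and y0: "y = 0" by (auto simp: add_nonneg_eq_0_iff)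
      have "sqrt ((x - 1)^2 + y^2) = \<bar>x - 1\<bar>" unfolding y0 by simp
      hence "\<bar>m - 1\<bar> \<ge> 1" using assms(2) xm by simp
      hence "m = 0" using m0 m1 by simp
      thus False using False xm y0 by simp
    qed
    have H: "Hf x y m * (t - m) \<ge> 0"
    proof (cases "t1 x y > 0")
      case True
      hence "m = t1 x y" unfolding m_def by simp
      thus ?thesis using cr True by simp
    next
      case False
      hence "m = 0" unfolding m_def by simp
      thus ?thesis using cr False t by simp
    qed
    show ?thesis
      by (rule tangent[OF assms(2) m0 m1 t dpos]) (use H in \<open>simp add: Hf_def\<close>)
  qed
  have "CR_A1 x y = Sup (CR_A1_at x y ` {0..1})" unfolding CR_A1_def by simp
  also have "\<dots> = CR_A1_at x y m"
    by (rule cSup_eq_maximum) (use m0 m1 bound in auto)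
  finally show ?thesis unfolding m_def .
qed

end
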